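(* Suppose $(\mathcal W,\mathcal W,\mu)$ is a reduced system of the FTvN system $(\mathcal V,\mathcal W,\lambda)$, where $\mathcal V$ and $\mathcal W$ are both finite dimensional. For $x,y\in\mathcal V$: $x\prec y$ in $\mathcal V$ (i.e. $x\in\operatorname{conv}[y]$) if and only if $\lambda(x)\prec\lambda(y)$ in $\mathcal W$. In particular, if $\mathcal V$ is a Euclidean Jordan algebra of rank $n$ with trace inner product and $\lambda:\mathcal V\to\mathbb R^n$ is its eigenvalue map, then $x\in\operatorname{conv}[y]$ if and only if $\lambda(x)\prec\lambda(y)$ in $\mathbb R^n$.
   Context: A Fan-Theobald-von Neumann (FTvN) system is a triple $(\mathcal V,\mathcal W,\lambda)$ where $\mathcal V,\mathcal W$ are real inner product spaces and $\lambda:\mathcal V\to\mathcal W$ is a map such that: (A1) $\|\lambda(x)\|=\|x\|$ for all $x$; (A2) $\langle x,y\rangle\le\langle\lambda(x),\lambda(y)\rangle$ for all $x,y$; (A3) for every $c\in\mathcal V$ and $q\in\lambda(\mathcal V)$ there exists $x$ with $\lambda(x)=q$ and $\langle c,x\rangle=\langle\lambda(c),\lambda(x)\rangle$. A FTvN system $(\mathcal W,\mathcal W,\mu)$ is a reduced system of $(\mathcal V,\mathcal W,\lambda)$ if (C1) $\mu\circ\lambda=\lambda$ and (C2) $\operatorname{ran}\mu\subseteq\operatorname{ran}\lambda$. $[y]=\{z\in\mathcal V:\lambda(z)=\lambda(y)\}$; in $\mathcal W$, $v\prec u$ iff $v\in\operatorname{conv}\{w:\mu(w)=\mu(u)\}$.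 For a Euclidean Jordan algebra, $\lambda(x)$ lists eigenvalues of $x$ in decreasing order, and for $u,v\in\mathbb R^n$, $u\prec v$ means $\sum_{i=1}^k u^\downarrow_i\le\sum_{i=1}^k v^\downarrow_i$ for all $k$ with equality at $k=n$. *)

theory Defs
  imports "HOL-Analysis.Analysis"
begin

definition FTvN :: "('v::real_inner \<Rightarrow> 'w::real_inner) \<Rightarrow> bool" where
  "FTvN lam \<longleftrightarrow>
     (\<forall>x. norm (lam x) = norm x) \<and>
     (\<forall>x y. inner x y \<le> inner (lam x) (lam y)) \<and>
     (\<forall>c q. q \<in> range lam \<longrightarrow> (\<exists>x. lam x = q \<and> inner c x = inner (lam c) (lam x)))"

definition reduced_system :: "('w::real_inner \<Rightarrow> 'w) \<Rightarrow> ('v::real_inner \<Rightarrow> 'w) \<Rightarrow> bool" where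
  "reduced_system mu lam \<longleftrightarrow> FTvN mu \<and> FTvN lam \<and> (\<forall>x. mu (lam x) = lam x) \<and> range mu \<subseteq> range lam"

definition eqclass :: "('v \<Rightarrow> 'w) \<Rightarrow> 'v \<Rightarrow> 'v set" where
  "eqclass lam y = {z. lam z = lam y}"

definition ftvn_majorized :: "('v::real_vector \<Rightarrow> 'w) \<Rightarrow> 'v \<Rightarrow> 'v \<Rightarrow> bool" where
  "ftvn_majorized lam x y \<longleftrightarrow> x \<in> convex hull (eqclass lam y)"

definition decr_list :: "(real, 'n::{finite,linorder}) vec \<Rightarrow> real list" where
  "decr_list u = rev (sort (map (\<lambda>i. u $ i) (sorted_list_of_set (UNIV :: 'n set))))"

definition vec_majorized :: "(real, 'n::{finite,linorder}) vec \<Rightarrow> (real, 'n) vec \<Rightarrow> bool" where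
  "vec_majorized u v \<longleftrightarrow>
     (\<forall>k. 1 \<le> k \<and> k \<le> length (decr_list u) \<longrightarrow> sum_list (take k (decr_list u)) \<le> sum_list (take k (decr_list v))) \<and>
     sum_list (decr_list u) = sum_list (decr_list v)"

definition EJA :: "('a::euclidean_space \<Rightarrow> 'a \<Rightarrow> 'a) \<Rightarrow> 'a \<Rightarrow> bool" where
  "EJA jp e \<longleftrightarrow>
     bilinear jp \<and>
     (\<forall>x y. jp x y = jp y x) \<and>
     (\<forall>x y. jp (jp x x) (jp x y) = jp x (jp (jp x x) y)) \<and>
     (\<forall>x. jp e x = x) \<and>
     (\<forall>x y z. inner (jp x y) z = inner y (jp x z))"

definition idempotent :: "('a \<Rightarrow> 'a \<Rightarrow> 'a) \<Rightarrow> 'a::zero \<Rightarrow> bool" where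
  "idempotent jp c \<longleftrightarrow> jp c c = c"

definition primitive_idempotent :: "('a \<Rightarrow> 'a \<Rightarrow> 'a) \<Rightarrow> 'a::real_vector \<Rightarrow> bool" where
  "primitive_idempotent jp c \<longleftrightarrow> idempotent jp c \<and> c \<noteq> 0 \<and>
     \<not> (\<exists>a b. idempotent jp a \<and> idempotent jp b \<and> a \<noteq> 0 \<and> b \<noteq> 0 \<and> c = a + b)"

definition jordan_frame :: "('a \<Rightarrow> 'a \<Rightarrow> 'a) \<Rightarrow> 'a::real_vector \<Rightarrow> 'i set \<Rightarrow> ('i \<Rightarrow> 'a) \<Rightarrow> bool" where
  "jordan_frame jp e I c \<longleftrightarrow> finite I \<and>
     (\<forall>i\<in>I. primitive_idempotent jp (c i)) \<and>
     (\<forall>i\<in>I. \<forall>j\<in>I. i \<noteq> j \<longrightarrow> jp (c i) (c j) = 0) \<and>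
     (\<Sum>i\<in>I. c i) = e"

definition EJA_rank :: "('a::euclidean_space \<Rightarrow> 'a \<Rightarrow> 'a) \<Rightarrow> 'a \<Rightarrow> nat \<Rightarrow> bool" where
  "EJA_rank jp e n \<longleftrightarrow> EJA jp e \<and> (\<exists>c :: nat \<Rightarrow> 'a. jordan_frame jp e {..<n} c)"

definition eigenvalue_map :: "('a::euclidean_space \<Rightarrow> 'a \<Rightarrow> 'a) \<Rightarrow> 'a \<Rightarrow> ('a \<Rightarrow> (real, 'n::{finite,linorder}) vec) \<Rightarrow> bool" where
  "eigenvalue_map jp e lam \<longleftrightarrow>
     (\<forall>x. (\<forall>i j. i \<le> j \<longrightarrow> lam x $ j \<le> lam x $ i) \<and>
          (\<exists>c. jordan_frame jp e (UNIV :: 'n set) c \<and> x = (\<Sum>i\<in>UNIV. (lam x $ i) *\<^sub>R c i)))"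

definition EJA_trace :: "('a \<Rightarrow> real^'n::finite) \<Rightarrow> 'a \<Rightarrow> real" where
  "EJA_trace lam x = (\<Sum>i\<in>UNIV. lam x $ i)"

end

theory Submission
  imports Defs "HOL-Library.Multiset"
begin


lemma lipschitz_sq:
  fixes lam :: "'v::real_inner \<Rightarrow> 'w::real_inner"
  assumes n: "\<And>x. norm (lam x) = norm x" and i: "\<And>x y. inner x y \<le> inner (lam x) (lam y)"
  shows "norm (lam a - lam b) \<le> norm (a - b)"
proof -
  have "(norm (lam a - lam b))\<^sup>2 = (norm (lam a))\<^sup>2 + (norm (lam b))\<^sup>2 - 2 * inner (lam a) (lam b)"
    by (simp add: power2_norm_eq_inner algebra_simps inner_commute)
  also have "\<dots> \<le> (norm a)\<^sup>2 + (norm b)\<^sup>2 - 2 * inner a b" using n[of a] n[of b] i[of a b] by simp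
  also have "\<dots> = (norm (a - b))\<^sup>2" by (simp add: power2_norm_eq_inner algebra_simps inner_commute)
  finally show ?thesis using power2_le_imp_le by fastforce
qed

lemma class_compact:
  fixes lam :: "'v::euclidean_space \<Rightarrow> 'w::real_inner"
  assumes n: "\<And>x. norm (lam x) = norm x" and i: "\<And>x y. inner x y \<le> inner (lam x) (lam y)"
  shows "compact (convex hull {z. lam z = q})"
proof -
  have c: "continuous_on UNIV lam"
    by (rule lipschitz_on_continuous_on[of 1], rule lipschitz_onI) (use lipschitz_sq[OF n i] in \<open>auto simp: dist_norm\<close>)
  have cl: "closed {z. lam z = q}"
    by (rule closed_Collect_eq[OF c continuous_on_const])
  have b: "bounded {z. lam z = q}"
    unfolding bounded_iff using n by (intro exI[of _ "norm q"]) auto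
  show ?thesis by (rule compact_convex_hull) (simp add: compact_eq_bounded_closed cl b)
qed

lemma separate:
  fixes x :: "'v::euclidean_space"
  assumes "compact (convex hull K)" "x \<notin> convex hull K"
  shows "\<exists>a. \<forall>z\<in>K. inner a z < inner a x"
proof -
  obtain a b where ab: "inner a x < b" "\<forall>z\<in>convex hull K. inner a z > b"
    using separating_hyperplane_closed_point[OF convex_convex_hull compact_imp_closed[OF assms(1)] assms(2)] by blast
  show ?thesis
    by (rule exI[of _ "-a"]) (use ab hull_subset[of K convex] in force)
qed

lemma halfspace_hull:
  assumes "\<And>z. z \<in> K \<Longrightarrow> inner a z \<le> b" "x \<in> convex hull K"
  shows "inner a x \<le> b"
proof -
  have "convex hull K \<subseteq> {x. inner a x \<le> b}"
    by (rule hull_minimal) (use assms(1) convex_halfspace_le in auto)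
  then show ?thesis using assms(2) by auto
qed

lemma part1:
  fixes lam :: "'v::euclidean_space \<Rightarrow> 'w::euclidean_space" and mu :: "'w \<Rightarrow> 'w"
  assumes "reduced_system mu lam"
  shows "ftvn_majorized lam x y \<longleftrightarrow> ftvn_majorized mu (lam x) (lam y)"
proof -
  have L: "FTvN lam" and M: "FTvN mu" and ml: "\<And>x. mu (lam x) = lam x" and rg: "range mu \<subseteq> range lam"
    using assms by (auto simp: reduced_system_def)
  note Ln = L[unfolded FTvN_def, THEN conjunct1, rule_format]
  note Li = L[unfolded FTvN_def, THEN conjunct2, THEN conjunct1, rule_format]
  note L3 = L[unfolded FTvN_def, THEN conjunct2, THEN conjunct2, rule_format]
  note Mn = M[unfolded FTvN_def, THEN conjunct1, rule_format]
  note Mi = M[unfolded FTvN_def, THEN conjunct2, THEN conjunct1, rule_format]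
  note M3 = M[unfolded FTvN_def, THEN conjunct2, THEN conjunct2, rule_format]
  have cV: "compact (convex hull {z. lam z = lam y})" by (rule class_compact[OF Ln Li])
  have cW: "compact (convex hull {w. mu w = mu (lam y)})" by (rule class_compact[OF Mn Mi])
  show ?thesis unfolding ftvn_majorized_def eqclass_def
  proof
    assume xh: "x \<in> convex hull {z. lam z = lam y}"
    show "lam x \<in> convex hull {w. mu w = mu (lam y)}"
    proof (rule ccontr)
      assume "lam x \<notin> convex hull {w. mu w = mu (lam y)}"
      then obtain c where c: "\<And>w. mu w = mu (lam y) \<Longrightarrow> inner c w < inner c (lam x)"
        using separate[OF cW] by blast
      obtain d where d: "mu c = lam d" using rg by auto
      obtain z' where z': "lam z' = lam d" "inner x z' = inner (lam x) (lam z')"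
        using L3[of "lam d" x] by auto
      have "inner z' x \<le> inner (lam d) (lam y)"
      proof (rule halfspace_hull[OF _ xh])
        fix z assume "z \<in> {z. lam z = lam y}"
        then show "inner z' z \<le> inner (lam d) (lam y)" using Li[of z' z] z' by auto
      qed
      hence 1: "inner (lam d) (lam x) \<le> inner (lam d) (lam y)" using z' by (simp add: inner_commute)
      have "inner c (lam x) \<le> inner (mu c) (mu (lam x))" by (rule Mi)
      hence 2: "inner c (lam x) \<le> inner (mu c) (mu (lam y))" using 1 d ml by simp
      obtain w0 where w0: "mu w0 = mu (lam y)" "inner c w0 = inner (mu c) (mu w0)"
        using M3[of "mu (lam y)" c] by auto
      show False using c[OF w0(1)] w0 2 by simp
    qed
  next
    assume xh: "lam x \<in> convex hull {w. mu w = mu (lam y)}"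
    show "x \<in> convex hull {z. lam z = lam y}"
    proof (rule ccontr)
      assume "x \<notin> convex hull {z. lam z = lam y}"
      then obtain d where d: "\<And>z. lam z = lam y \<Longrightarrow> inner d z < inner d x"
        using separate[OF cV] by blast
      have "inner (lam d) (lam x) \<le> inner (lam d) (lam y)"
      proof (rule halfspace_hull[OF _ xh])
        fix w assume "w \<in> {w. mu w = mu (lam y)}"
        then show "inner (lam d) w \<le> inner (lam d) (lam y)" using Mi[of "lam d" w] ml by auto
      qed
      hence 1: "inner d x \<le> inner (lam d) (lam y)" using Li[of d x] by simp
      obtain z where z: "lam z = lam y" "inner d z = inner (lam d) (lam z)"
        using L3[of "lam y" d] by auto
      show False using d[OF z(1)] z 1 by simp
    qed
  qed
qed




lemma weight_lemma:
  fixes a w :: "'n::finite \<Rightarrow> real"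
  assumes w0: "\<And>j. 0 \<le> w j" and w1: "\<And>j. w j \<le> 1" and ws: "(\<Sum>j\<in>UNIV. w j) = real (card S)"
    and hS: "\<And>j j'. j \<in> S \<Longrightarrow> j' \<notin> S \<Longrightarrow> a j' \<le> a j"
  shows "(\<Sum>j\<in>UNIV. a j * w j) \<le> (\<Sum>j\<in>S. a j)"
proof (cases "S = {}")
  case True
  then have "\<forall>j\<in>UNIV. w j = 0" using ws w0 by (simp add: sum_nonneg_eq_0_iff)
  then show ?thesis using True by simp
next
  case False
  define t where "t = Min (a ` S)"
  have tS: "j \<in> S \<Longrightarrow> t \<le> a j" for j by (simp add: t_def)
  have tN: "j' \<notin> S \<Longrightarrow> a j' \<le> t" for j'
  proof -
    assume j': "j' \<notin> S"
    have "t \<in> a ` S" unfolding t_def using False by (intro Min_in) auto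
    then show ?thesis using hS j' by auto
  qed
  have sp: "(\<Sum>j\<in>UNIV. f j) = (\<Sum>j\<in>S. f j) + (\<Sum>j\<in>-S. f j)" for f :: "'n \<Rightarrow> real"
    using sum.subset_diff[of S UNIV f] by (simp add: Compl_eq_Diff_UNIV add.commute)
  have "(\<Sum>j\<in>UNIV. a j * w j) - (\<Sum>j\<in>S. a j) = (\<Sum>j\<in>S. a j * (w j - 1)) + (\<Sum>j\<in>-S. a j * w j)"
    using sp[of "\<lambda>j. a j * w j"] by (simp add: algebra_simps sum_subtractf sum.distrib)
  also have "\<dots> \<le> (\<Sum>j\<in>S. t * (w j - 1)) + (\<Sum>j\<in>-S. t * w j)"
  proof (rule add_mono; rule sum_mono)
    fix j assume "j \<in> S" then show "a j * (w j - 1) \<le> t * (w j - 1)"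
      using tS[of j] w1[of j] by (simp add: mult_right_mono_neg)
  next
    fix j assume "j \<in> -S" then show "a j * w j \<le> t * w j"
      using tN[of j] w0[of j] by (simp add: mult_right_mono)
  qed
  also have "\<dots> = t * ((\<Sum>j\<in>UNIV. w j) - real (card S))"
    using sp[of w] by (simp add: sum_distrib_left[symmetric] sum_subtractf algebra_simps)
  also have "\<dots> = 0" using ws by simp
  finally show ?thesis by simp
qed

definition LL :: "'n::{finite,linorder} list" where "LL = sorted_list_of_set UNIV"
definition seg :: "nat \<Rightarrow> 'n::{finite,linorder} set" where "seg k = set (take k LL)"
abbreviation decr :: "('n::{finite,linorder} \<Rightarrow> real) \<Rightarrow> bool" where
  "decr a \<equiv> (\<forall>i j. i \<le> j \<longrightarrow> a j \<le> a i)"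

lemma LL_distinct: "distinct (LL::'n::{finite,linorder} list)" by (simp add: LL_def)
lemma LL_set: "set (LL::'n::{finite,linorder} list) = UNIV" by (simp add: LL_def)
lemma LL_length: "length (LL::'n::{finite,linorder} list) = CARD('n)" by (simp add: LL_def)
lemma LL_sorted: "sorted_wrt (<) (LL::'n::{finite,linorder} list)" by (simp add: LL_def)

lemma seg_order:
  fixes a :: "'n::{finite,linorder} \<Rightarrow> real"
  assumes "decr a" "j \<in> seg k" "j' \<notin> seg k"
  shows "a j' \<le> a j"
proof -
  obtain p where p: "p < length (take k (LL::'n list))" "take k LL ! p = j" using assms(2) unfolding seg_def in_set_conv_nth by blast
  have "j' \<in> set (LL::'n list)" by (simp add: LL_set)
  then obtain q where q: "q < length (LL::'n list)" "j' = LL ! q" by (metis in_set_conv_nth)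
  have pk: "p < k" "j = LL ! p" "p < length (LL::'n list)" using p by auto
  have "\<not> q < k"
  proof
    assume qk: "q < k"
    then have "take k LL ! q \<in> set (take k (LL::'n list))" using q(1) by (intro nth_mem) simp
    then show False using assms(3) q qk by (simp add: seg_def)
  qed
  then have "p < q" using pk by simp
  then have "j < j'" using LL_sorted[where 'n='n] q pk by (simp add: sorted_wrt_iff_nth_less)
  then show ?thesis using assms(1) pk q by simp
qed

lemma seg_card: "card (seg k :: 'n::{finite,linorder} set) = min k CARD('n)"
  by (simp add: seg_def distinct_card LL_distinct LL_length)

lemma seg_sum: "sum f (seg k :: 'n::{finite,linorder} set) = (\<Sum>i<min k CARD('n). f (LL ! i))"
proof -
  have "sum f (seg k) = sum_list (map f (take k LL))"
    by (simp add: seg_def sum_list_distinct_conv_sum_set LL_distinct)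
  also have "\<dots> = (\<Sum>i<length (take k (LL::'n list)). f (take k LL ! i))"
    by (simp add: sum_list_sum_nth atLeast0LessThan)
  also have "\<dots> = (\<Sum>i<min k CARD('n). f (LL ! i))" by (simp add: LL_length min.commute)
  finally show ?thesis .
qed

lemma seg_all: "seg CARD('n) = (UNIV :: 'n::{finite,linorder} set)"
  by (simp add: seg_def LL_length[symmetric] LL_set)

lemma abel:
  fixes l v w :: "'n::{finite,linorder} \<Rightarrow> real"
  assumes l: "decr l" and pw: "\<And>k. sum v (seg k) \<le> sum w (seg k)" and tot: "sum v UNIV = sum w UNIV"
  shows "(\<Sum>i\<in>UNIV. l i * v i) \<le> (\<Sum>i\<in>UNIV. l i * w i)"
proof -
  define n where "n = CARD('n)"
  define d where "d i = w i - v i" for i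
  define D where "D m = (\<Sum>k<m. d (LL ! k))" for m
  have Dn: "m \<le> n \<Longrightarrow> 0 \<le> D m" for m
    using pw[of m] seg_sum[of v m] seg_sum[of w m] by (simp add: D_def d_def n_def sum_subtractf min_absorb1)
  have DN: "D n = 0" using tot seg_sum[of v n] seg_sum[of w n] seg_all[where 'n='n]
    by (simp add: D_def d_def n_def sum_subtractf)
  have mono: "Suc m < n \<Longrightarrow> l (LL ! Suc m) \<le> l (LL ! m)" for m
  proof -
    assume "Suc m < n"
    then have "LL ! m < (LL ! Suc m :: 'n)" using LL_sorted[where 'n='n]
      by (simp add: sorted_wrt_iff_nth_less LL_length n_def)
    then show ?thesis using l by simp
  qed
  have ind: "m < n \<longrightarrow> l (LL ! m) * D (Suc m) \<le> (\<Sum>k<Suc m. l (LL ! k) * d (LL ! k))" for m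
  proof (induction m)
    case 0 then show ?case by (simp add: D_def)
  next
    case (Suc m)
    show ?case
    proof
      assume sm: "Suc m < n"
      have "l (LL ! Suc m) * D (Suc m) \<le> l (LL ! m) * D (Suc m)"
        using mono[OF sm] Dn[of "Suc m"] sm by (simp add: mult_right_mono)
      also have "\<dots> \<le> (\<Sum>k<Suc m. l (LL ! k) * d (LL ! k))" using Suc sm by simp
      finally have "l (LL ! Suc m) * D (Suc (Suc m)) \<le> (\<Sum>k<Suc (Suc m). l (LL ! k) * d (LL ! k))"
        by (simp add: D_def algebra_simps)
      then show "l (LL ! Suc m) * D (Suc (Suc m)) \<le> (\<Sum>k<Suc (Suc m). l (LL ! k) * d (LL ! k))" .
    qed
  qed
  have n0: "0 < n" by (simp add: n_def)
  then obtain m where m: "n = Suc m" using not0_implies_Suc by blast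
  have "0 \<le> (\<Sum>k<n. l (LL ! k) * d (LL ! k))" using ind[of m] m DN by simp
  also have "(\<Sum>k<n. l (LL ! k) * d (LL ! k)) = (\<Sum>i\<in>UNIV. l i * d i)"
    using seg_sum[of "\<lambda>i. l i * d i" n] seg_all[where 'n='n] by (simp add: n_def)
  finally show ?thesis by (simp add: d_def algebra_simps sum_subtractf)
qed

lemma decr_list_eq:
  fixes u :: "(real,'n::{finite,linorder}) vec"
  assumes "\<forall>i j. i \<le> j \<longrightarrow> u $ j \<le> u $ i"
  shows "decr_list u = map (\<lambda>i. u $ i) LL"
proof -
  let ?l = "map (\<lambda>i. u $ i) (LL :: 'n list)"
  have "sorted (rev ?l)"
  proof -
    have "sorted_wrt (\<ge>) ?l"
      using LL_sorted[where 'n='n] assms by (auto simp: sorted_wrt_map elim!: sorted_wrt_mono_rel[rotated])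
    then show ?thesis by (simp add: sorted_wrt_rev)
  qed
  then have "sort ?l = rev ?l" by (intro properties_for_sort) simp_all
  then show ?thesis by (simp add: decr_list_def LL_def)
qed




lemma sc4: "4 *\<^sub>R (x::'a::real_vector) = x + x + x + x"
proof - have "(4::real) = 1+1+1+1" by simp then show ?thesis by (simp only: scaleR_add_left scaleR_one) qed
lemma sc6: "6 *\<^sub>R (x::'a::real_vector) = x + x + x + x + x + x"
proof - have "(6::real) = 1+1+1+1+1+1" by simp then show ?thesis by (simp only: scaleR_add_left scaleR_one) qed

context
  fixes jp :: "'a::euclidean_space \<Rightarrow> 'a \<Rightarrow> 'a"
  assumes bl: "bilinear jp" and cm: "\<And>x y. jp x y = jp y x"
    and jid: "\<And>x y. jp (jp x x) (jp x y) = jp x (jp (jp x x) y)"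
    and ass: "\<And>x y z. inner (jp x y) z = inner y (jp x z)"
begin

lemma jp_ladd: "jp (x + y) z = jp x z + jp y z" using bilinear_ladd[OF bl] .
lemma jp_radd: "jp z (x + y) = jp z x + jp z y" using bilinear_radd[OF bl] .
lemma jp_lsub: "jp (x - y) z = jp x z - jp y z" using bilinear_lsub[OF bl] .
lemma jp_rsub: "jp z (x - y) = jp z x - jp z y" using bilinear_rsub[OF bl] .
lemma jp_lmul: "jp (a *\<^sub>R x) y = a *\<^sub>R jp x y" using bilinear_lmul[OF bl] .
lemma jp_rmul: "jp y (a *\<^sub>R x) = a *\<^sub>R jp y x" using bilinear_rmul[OF bl] .
lemma jp_lzero: "jp 0 y = 0" using bilinear_lzero[OF bl] by simp
lemma jp_rzero: "jp y 0 = 0" using bilinear_rzero[OF bl] by simp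
lemma jp_sum_left: "jp (sum f A) y = (\<Sum>i\<in>A. jp (f i) y)"
proof -
  have "linear (\<lambda>x. jp x y)" using bl by (simp add: bilinear_def)
  from linear_sum[OF this, of f A] show ?thesis by simp
qed
lemma jp_sum_right: "jp y (sum f A) = (\<Sum>i\<in>A. jp y (f i))"
  using jp_sum_left[of f A y] by (simp add: cm)

lemmas jp_simps = jp_ladd jp_radd jp_lsub jp_rsub jp_lmul jp_rmul jp_lzero jp_rzero

lemma idem_cubic:
  assumes cc: "jp c c = c"
  shows "2 *\<^sub>R jp c (jp c (jp c z)) = 3 *\<^sub>R jp c (jp c z) - jp c z"
proof -
  have E1: "jp (jp (c+z) (c+z)) (jp (c+z) c) = jp (c+z) (jp (jp (c+z) (c+z)) c)" by (rule jid)
  have E2: "jp (jp (c-z) (c-z)) (jp (c-z) c) = jp (c-z) (jp (jp (c-z) (c-z)) c)" by (rule jid)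
  have E3: "jp (jp z z) (jp z c) = jp z (jp (jp z z) c)" by (rule jid)
  let ?A = "jp (jp c z) c" let ?B = "jp c (jp c z)" let ?C = "jp c (jp c (jp c z))"
  have ca: "jp (jp c z) c = jp c (jp c z)" by (simp add: cm)
  have "jp (jp (c+z) (c+z)) (jp (c+z) c) - jp (c+z) (jp (jp (c+z) (c+z)) c)
      - (jp (jp (c-z) (c-z)) (jp (c-z) c) - jp (c-z) (jp (jp (c-z) (c-z)) c))
      - 2 *\<^sub>R (jp (jp z z) (jp z c) - jp z (jp (jp z z) c))
      = 2 *\<^sub>R (3 *\<^sub>R jp c (jp c z) - jp c z - 2 *\<^sub>R jp c (jp c (jp c z)))"
    apply (simp add: jp_simps cc)
    apply (simp add: cm[of z c] cm[of "jp c z" c] cm[of "jp z z" c] cm[of z "jp c z"] algebra_simps)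
    apply (simp add: ac_simps sc4 sc6 scaleR_2)
    done
  then have "2 *\<^sub>R (3 *\<^sub>R jp c (jp c z) - jp c z - 2 *\<^sub>R jp c (jp c (jp c z))) = 0"
    using E1 E2 E3 by simp
  then have "3 *\<^sub>R jp c (jp c z) - jp c z - 2 *\<^sub>R jp c (jp c (jp c z)) = 0" by simp
  then show ?thesis by (simp add: algebra_simps)
qed

lemma idem_psd:
  assumes cc: "jp c c = c"
  shows "0 \<le> inner (jp c z) z"
proof -
  define z1 where "z1 = jp c z"
  define z2 where "z2 = jp c z1"
  define z3 where "z3 = jp c z2"
  define z4 where "z4 = jp c z3"
  have r1: "2 *\<^sub>R z3 = 3 *\<^sub>R z2 - z1" using idem_cubic[OF cc, of z] by (simp add: z1_def z2_def z3_def)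
  have r2: "2 *\<^sub>R z4 = 3 *\<^sub>R z3 - z2" using idem_cubic[OF cc, of z1] by (simp add: z4_def z2_def z3_def)
  have i11: "inner z1 z1 = inner z z2" using ass[of c z z1] by (simp add: z1_def z2_def inner_commute)
  have i12: "inner z1 z2 = inner z z3" using ass[of c z z2] by (simp add: z1_def z3_def inner_commute)
  have i22: "inner z2 z2 = inner z1 z3" using ass[of c z1 z2] by (simp add: z2_def z3_def inner_commute)
  have i13: "inner z1 z3 = inner z z4" using ass[of c z z3] by (simp add: z1_def z4_def inner_commute)
  have a3: "2 * inner z z3 = 3 * inner z z2 - inner z z1"
    using arg_cong[OF r1, of "inner z"] by (simp add: inner_diff_right)
  have a4: "2 * inner z z4 = 3 * inner z z3 - inner z z2"
    using arg_cong[OF r2, of "inner z"] by (simp add: inner_diff_right)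
  have p1: "0 \<le> inner (2 *\<^sub>R z2 - z1) (2 *\<^sub>R z2 - z1)" by simp
  have p2: "0 \<le> inner (z1 - z2) (z1 - z2)" by simp
  have p1': "0 \<le> 4 * inner z2 z2 - 4 * inner z1 z2 + inner z1 z1"
    using p1 by (simp add: inner_diff_left inner_diff_right inner_commute algebra_simps)
  have p2': "0 \<le> inner z1 z1 - 2 * inner z1 z2 + inner z2 z2"
    using p2 by (simp add: inner_diff_left inner_diff_right inner_commute algebra_simps)
  have "inner (jp c z) z = inner z z1" by (simp add: z1_def inner_commute)
  then show ?thesis using p1' p2' i11 i12 i22 i13 a3 a4 by linarith
qed

lemma idem_inner_nonneg:
  assumes "jp c c = c" "jp d d = d"
  shows "0 \<le> inner c d"
proof -
  have "inner c d = inner (jp d d) c" using assms by (simp add: inner_commute)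
  also have "\<dots> = inner (jp c d) d" using ass[of d d c] by (simp add: cm inner_commute)
  finally show ?thesis using idem_psd[OF assms(1)] by simp
qed

end



context
  fixes jp :: "'a::euclidean_space \<Rightarrow> 'a \<Rightarrow> 'a" and e :: 'a
    and lam :: "'a \<Rightarrow> (real,'n::{finite,linorder}) vec"
  assumes ej: "EJA jp e" and em: "eigenvalue_map jp e lam"
    and tr: "\<forall>u v. inner u v = EJA_trace lam (jp u v)"
begin

lemma bl: "bilinear jp" using ej by (simp add: EJA_def)
lemma cm: "jp x y = jp y x" using ej by (simp add: EJA_def)
lemma jid: "jp (jp x x) (jp x y) = jp x (jp (jp x x) y)" using ej by (simp add: EJA_def)
lemma un: "jp e x = x" using ej by (simp add: EJA_def)
lemma ass: "inner (jp x y) z = inner y (jp x z)" using ej by (simp add: EJA_def)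
lemma em_decr: "decr (\<lambda>i. lam x $ i)" using em by (simp add: eigenvalue_map_def)
lemma em_frame: "\<exists>c. jordan_frame jp e UNIV c \<and> x = (\<Sum>i\<in>UNIV. (lam x $ i) *\<^sub>R c i)"
  using em by (simp add: eigenvalue_map_def)

lemmas jps = jp_simps[OF bl cm jid ass]
lemmas jp_sum_left' = jp_sum_left[OF bl cm jid ass]
lemmas jp_sum_right' = jp_sum_right[OF bl cm jid ass]

lemma inner_e: "inner e w = (\<Sum>i\<in>UNIV. lam w $ i)"
  using tr un by (simp add: EJA_trace_def)
lemma inner_ee: "inner u v = inner e (jp u v)"
  using tr inner_e by (simp add: EJA_trace_def)

context
  fixes c :: "'n \<Rightarrow> 'a"
  assumes fr: "jordan_frame jp e UNIV c"
begin

lemma fr_idem: "jp (c i) (c i) = c i"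
  using fr by (simp add: jordan_frame_def primitive_idempotent_def idempotent_def)
lemma fr_ne: "c i \<noteq> 0"
  using fr by (simp add: jordan_frame_def primitive_idempotent_def)
lemma fr_prim: "primitive_idempotent jp (c i)"
  using fr by (simp add: jordan_frame_def)
lemma fr_m: "jp (c j) (c k) = (if k = j then c j else 0)"
  using fr fr_idem by (auto simp: jordan_frame_def)
lemma fr_sum: "(\<Sum>i\<in>UNIV. c i) = e"
  using fr by (simp add: jordan_frame_def)
lemma fr_ip: "i \<noteq> j \<Longrightarrow> inner (c i) (c j) = 0"
  using inner_ee[of "c i" "c j"] fr_m[of i j] by simp

lemma fr_prod: "jp (\<Sum>j\<in>UNIV. a j *\<^sub>R c j) (\<Sum>j\<in>UNIV. b j *\<^sub>R c j) = (\<Sum>j\<in>UNIV. (a j * b j) *\<^sub>R c j)"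
  by (simp add: jp_sum_left' jp_sum_right' jps fr_m if_distrib mult.commute cong: if_cong)

lemma fr_coef0: "inner (\<Sum>j\<in>UNIV. a j *\<^sub>R c j) (c k) = a k * inner (c k) (c k)"
proof -
  have "inner (\<Sum>j\<in>UNIV. a j *\<^sub>R c j) (c k) = (\<Sum>j\<in>UNIV. a j * inner (c j) (c k))"
    by (simp add: inner_sum_left)
  also have "\<dots> = (\<Sum>j\<in>UNIV. if j = k then a k * inner (c k) (c k) else 0)"
    by (rule sum.cong) (auto simp: fr_ip)
  finally show ?thesis by simp
qed

end

lemma prim_trace:
  assumes pp: "primitive_idempotent jp p"
  shows "inner e p = 1"
proof -
  define l where "l i = lam p $ i" for i
  obtain d where fd: "jordan_frame jp e UNIV d" and pd: "p = (\<Sum>i\<in>UNIV. l i *\<^sub>R d i)"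
    using em_frame[of p] by (auto simp: l_def)
  have p2: "jp p p = p" using pp by (simp add: primitive_idempotent_def idempotent_def)
  have p0: "p \<noteq> 0" using pp by (simp add: primitive_idempotent_def)
  have npos: "0 < inner (d k) (d k)" for k using fr_ne[OF fd] by simp
  have l01: "l k = 0 \<or> l k = 1" for k
  proof -
    have "(\<Sum>j\<in>UNIV. (l j * l j) *\<^sub>R d j) = (\<Sum>j\<in>UNIV. l j *\<^sub>R d j)"
      using p2 fr_prod[OF fd, of l l] pd by simp
    then have "inner (\<Sum>j\<in>UNIV. (l j * l j) *\<^sub>R d j) (d k) = inner (\<Sum>j\<in>UNIV. l j *\<^sub>R d j) (d k)" by simp
    then have "l k * l k * inner (d k) (d k) = l k * inner (d k) (d k)"
      by (simp only: fr_coef0[OF fd])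
    then have "l k * l k = l k" using npos[of k] by simp
    then show ?thesis by (metis mult_cancel_right2 mult_zero_left)
  qed
  define S where "S = {j. l j = 1}"
  have ind: "\<And>j. l j = (if j \<in> S then 1 else 0)" using l01 by (auto simp: S_def)
  have idem_ind: "primitive_idempotent jp p \<Longrightarrow> False" if "j0 \<in> S" "j1 \<in> S" "j0 \<noteq> j1" for j0 j1
  proof -
    define A where "A = (\<Sum>j\<in>UNIV. (if j = j0 then 1 else 0) *\<^sub>R d j)"
    define B where "B = (\<Sum>j\<in>UNIV. (if j \<in> S - {j0} then 1 else 0) *\<^sub>R d j)"
    have "p = (\<Sum>j\<in>UNIV. ((if j = j0 then 1 else 0) + (if j \<in> S - {j0} then 1 else 0)) *\<^sub>R d j)"
      unfolding pd by (rule sum.cong) (use ind that in auto)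
    then have pab: "p = A + B" by (simp add: A_def B_def scaleR_add_left sum.distrib)
    have iA: "idempotent jp A" unfolding idempotent_def A_def fr_prod[OF fd] by (rule sum.cong) auto
    have iB: "idempotent jp B" unfolding idempotent_def B_def fr_prod[OF fd] by (rule sum.cong) auto
    have nA: "A \<noteq> 0"
    proof
      assume "A = 0" then have "inner A (d j0) = 0" by simp
      then show False unfolding A_def fr_coef0[OF fd] using npos[of j0] by simp
    qed
    have nB: "B \<noteq> 0"
    proof
      assume "B = 0" then have "inner B (d j1) = 0" by simp
      then show False unfolding B_def fr_coef0[OF fd] using npos[of j1] that by simp
    qed
    assume "primitive_idempotent jp p"
    then show False using iA iB nA nB pab by (auto simp: primitive_idempotent_def)
  qed
  have Sne: "S \<noteq> {}"
  proof
    assume "S = {}" then have "p = 0" unfolding pd using ind by simp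
    then show False using p0 by simp
  qed
  then obtain j0 where j0: "j0 \<in> S" by auto
  have Sj: "S = {j0}" using idem_ind[OF j0 _ _ pp] j0 by blast
  have "inner e p = (\<Sum>i\<in>UNIV. l i)" by (simp add: inner_e l_def)
  also have "\<dots> = 1" using ind Sj by simp
  finally show ?thesis .
qed

context
  fixes c :: "'n \<Rightarrow> 'a"
  assumes fr: "jordan_frame jp e UNIV c"
begin

lemma fr_e: "inner e (c k) = 1" by (rule prim_trace[OF fr_prim[OF fr]])
lemma fr_norm: "inner (c k) (c k) = 1"
  using inner_ee[of "c k" "c k"] fr_idem[OF fr] fr_e by simp
lemma fr_coef: "inner (\<Sum>j\<in>UNIV. a j *\<^sub>R c j) (c k) = a k"
  using fr_coef0[OF fr] fr_norm by simp

end

lemma fr_nonneg: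
  fixes c d :: "'n \<Rightarrow> 'a"
  assumes "jordan_frame jp e UNIV c" "jordan_frame jp e UNIV d"
  shows "0 \<le> inner (c j) (d i)"
  by (rule idem_inner_nonneg[OF bl cm jid ass fr_idem[OF assms(1)] fr_idem[OF assms(2)]])

lemma fr_row:
  fixes c d :: "'n \<Rightarrow> 'a"
  assumes "jordan_frame jp e UNIV c" "jordan_frame jp e UNIV d"
  shows "(\<Sum>i\<in>UNIV. inner (c j) (d i)) = 1"
  using fr_sum[OF assms(2)] fr_e[OF assms(1)] by (simp add: inner_sum_right[symmetric] inner_commute)

lemma KF:
  fixes c d :: "'n \<Rightarrow> 'a" and a :: "'n \<Rightarrow> real"
  assumes fc: "jordan_frame jp e UNIV c" and fd: "jordan_frame jp e UNIV d"
    and cST: "card S = card T"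
    and hS: "\<And>j j'. j \<in> S \<Longrightarrow> j' \<notin> S \<Longrightarrow> a j' \<le> a j"
  shows "(\<Sum>i\<in>T. inner (\<Sum>j\<in>UNIV. a j *\<^sub>R c j) (d i)) \<le> (\<Sum>j\<in>S. a j)"
proof -
  define w where "w j = (\<Sum>i\<in>T. inner (c j) (d i))" for j
  have eq: "(\<Sum>i\<in>T. inner (\<Sum>j\<in>UNIV. a j *\<^sub>R c j) (d i)) = (\<Sum>j\<in>UNIV. a j * w j)"
    by (simp add: w_def inner_sum_left sum_distrib_left sum.swap[of _ T])
  have w0: "0 \<le> w j" for j unfolding w_def by (rule sum_nonneg) (rule fr_nonneg[OF fc fd])
  have w1: "w j \<le> 1" for j
  proof -
    have "w j \<le> (\<Sum>i\<in>UNIV. inner (c j) (d i))" unfolding w_def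
      by (rule sum_mono2) (auto intro: fr_nonneg[OF fc fd])
    then show ?thesis using fr_row[OF fc fd] by simp
  qed
  have ws: "(\<Sum>j\<in>UNIV. w j) = real (card S)"
  proof -
    have "(\<Sum>j\<in>UNIV. w j) = (\<Sum>i\<in>T. inner (\<Sum>j\<in>UNIV. c j) (d i))"
      by (simp add: w_def inner_sum_left sum.swap[of _ T])
    also have "\<dots> = (\<Sum>i\<in>T. 1)" using fr_sum[OF fc] fr_e[OF fd] by simp
    finally show ?thesis using cST by simp
  qed
  show ?thesis unfolding eq by (rule weight_lemma[OF w0 w1 ws hS])
qed

lemma eig_unique:
  fixes c :: "'n \<Rightarrow> 'a" and b :: "'n \<Rightarrow> real"
  assumes fc: "jordan_frame jp e UNIV c" and bd: "decr b"
  shows "lam (\<Sum>j\<in>UNIV. b j *\<^sub>R c j) $ i = b i"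
proof -
  define z where "z = (\<Sum>j\<in>UNIV. b j *\<^sub>R c j)"
  define w where "w i = lam z $ i" for i
  obtain d where fd: "jordan_frame jp e UNIV d" and zd: "z = (\<Sum>i\<in>UNIV. w i *\<^sub>R d i)"
    using em_frame[of z] by (auto simp: w_def)
  have wd: "decr w" using em_decr[of z] by (simp add: w_def)
  have eqk: "sum w (seg k) = sum b (seg k)" for k
  proof -
    have "sum w (seg k) = (\<Sum>i\<in>seg k. inner z (d i))" using fr_coef[OF fd] zd by simp
    also have "\<dots> \<le> sum b (seg k)" unfolding z_def
      by (rule KF[OF fc fd refl]) (rule seg_order[OF bd])
    finally have 1: "sum w (seg k) \<le> sum b (seg k)" .
    have "sum b (seg k) = (\<Sum>i\<in>seg k. inner z (c i))" using fr_coef[OF fc] by (simp add: z_def)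
    also have "\<dots> \<le> sum w (seg k)" unfolding zd
      by (rule KF[OF fd fc refl]) (rule seg_order[OF wd])
    finally show ?thesis using 1 by simp
  qed
  have "i \<in> set (LL::'n list)" by (simp add: LL_set)
  then obtain m where m: "m < length (LL::'n list)" "i = LL ! m" by (metis in_set_conv_nth)
  have mn: "m < CARD('n)" using m LL_length[where 'n='n] by simp
  have "w i = sum w (seg (Suc m)) - sum w (seg m)"
    using mn m by (simp add: seg_sum min_absorb1)
  also have "\<dots> = sum b (seg (Suc m)) - sum b (seg m)" using eqk by simp
  also have "\<dots> = b i" using mn m by (simp add: seg_sum min_absorb1)
  finally show ?thesis by (simp add: w_def z_def)
qed

lemma A_inner: "inner x y \<le> inner (lam x) (lam y)"
proof -
  define l where "l i = lam x $ i" for i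
  define mu where "mu i = lam y $ i" for i
  obtain f where ff: "jordan_frame jp e UNIV f" and xf: "x = (\<Sum>i\<in>UNIV. l i *\<^sub>R f i)"
    using em_frame[of x] by (auto simp: l_def)
  obtain c where fc: "jordan_frame jp e UNIV c" and yc: "y = (\<Sum>i\<in>UNIV. mu i *\<^sub>R c i)"
    using em_frame[of y] by (auto simp: mu_def)
  define v where "v i = inner y (f i)" for i
  have "inner x y = (\<Sum>i\<in>UNIV. l i * v i)"
    by (simp add: xf v_def inner_sum_left inner_sum_right inner_commute)
  also have "\<dots> \<le> (\<Sum>i\<in>UNIV. l i * mu i)"
  proof (rule abel)
    show "decr l" using em_decr[of x] by (simp add: l_def)
    show "sum v (seg k) \<le> sum mu (seg k)" for k
      unfolding v_def yc by (rule KF[OF fc ff refl]) (rule seg_order, use em_decr[of y] in \<open>simp add: mu_def\<close>)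
    have "sum v UNIV = inner y (\<Sum>i\<in>UNIV. f i)" by (simp add: v_def inner_sum_right)
    also have "\<dots> = sum mu UNIV" using fr_sum[OF ff] inner_e[of y] by (simp add: inner_commute mu_def)
    finally show "sum v UNIV = sum mu UNIV" .
  qed
  also have "\<dots> = inner (lam x) (lam y)" by (simp add: inner_vec_def l_def mu_def)
  finally show ?thesis .
qed

lemma A_norm: "norm (lam x) = norm x"
proof -
  define l where "l i = lam x $ i" for i
  obtain f where ff: "jordan_frame jp e UNIV f" and xf: "x = (\<Sum>i\<in>UNIV. l i *\<^sub>R f i)"
    using em_frame[of x] by (auto simp: l_def)
  have "inner x x = (\<Sum>i\<in>UNIV. l i * inner x (f i))"
    by (subst (1) xf) (simp add: inner_sum_left inner_sum_right inner_commute)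
  also have "\<dots> = (\<Sum>i\<in>UNIV. l i * l i)" using fr_coef[OF ff] xf by simp
  also have "\<dots> = inner (lam x) (lam x)" by (simp add: inner_vec_def l_def)
  finally show ?thesis by (simp add: norm_eq_sqrt_inner)
qed

lemma sl_seg: "sum_list (take k (map f (LL::'n list))) = sum f (seg k)"
  by (simp add: take_map seg_def sum_list_distinct_conv_sum_set LL_distinct)
lemma sl_all: "sum_list (map f (LL::'n list)) = sum f UNIV"
  by (simp add: sum_list_distinct_conv_sum_set LL_distinct LL_set)

lemma maj_iff: "vec_majorized (lam x) (lam y) \<longleftrightarrow>
   (\<forall>k. 1 \<le> k \<and> k \<le> CARD('n) \<longrightarrow> sum (\<lambda>i. lam x $ i) (seg k) \<le> sum (\<lambda>i. lam y $ i) (seg k)) \<and>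
   sum (\<lambda>i. lam x $ i) UNIV = sum (\<lambda>i. lam y $ i) UNIV"
  unfolding vec_majorized_def decr_list_eq[OF em_decr[of x]] decr_list_eq[OF em_decr[of y]]
  by (simp add: sl_seg sl_all LL_length)

lemma seg_big: "CARD('n) \<le> k \<Longrightarrow> seg k = (UNIV::'n set)"
  by (simp add: seg_def LL_length[symmetric] LL_set)

lemma part2: "x \<in> convex hull {z. lam z = lam y} \<longleftrightarrow> vec_majorized (lam x) (lam y)"
proof
  assume xh: "x \<in> convex hull {z. lam z = lam y}"
  define X where "X i = lam x $ i" for i
  define Y where "Y i = lam y $ i" for i
  obtain f where ff: "jordan_frame jp e UNIV f" and xf: "x = (\<Sum>i\<in>UNIV. X i *\<^sub>R f i)"
    using em_frame[of x] by (auto simp: X_def)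
  have part: "sum X (seg k) \<le> sum Y (seg k)" for k
  proof -
    have "sum X (seg k) = inner (\<Sum>i\<in>seg k. f i) x"
      using fr_coef[OF ff] xf by (simp add: inner_sum_left inner_commute)
    also have "\<dots> \<le> sum Y (seg k)"
    proof (rule halfspace_hull[OF _ xh])
      fix z assume "z \<in> {z. lam z = lam y}"
      then have lz: "lam z = lam y" by simp
      obtain c where fc: "jordan_frame jp e UNIV c" and zc: "z = (\<Sum>i\<in>UNIV. Y i *\<^sub>R c i)"
        using em_frame[of z] lz by (auto simp: Y_def)
      have "inner (\<Sum>i\<in>seg k. f i) z = (\<Sum>i\<in>seg k. inner z (f i))"
        by (simp add: inner_sum_right inner_commute)
      also have "\<dots> \<le> sum Y (seg k)" unfolding zc
        by (rule KF[OF fc ff refl]) (rule seg_order, use em_decr[of y] in \<open>simp add: Y_def\<close>)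
      finally show "inner (\<Sum>i\<in>seg k. f i) z \<le> sum Y (seg k)" .
    qed
    finally show ?thesis .
  qed
  have tot: "sum X UNIV = sum Y UNIV"
  proof -
    have "convex hull {z. lam z = lam y} \<subseteq> {u. inner e u = sum Y UNIV}"
    proof (rule hull_minimal)
      show "{z. lam z = lam y} \<subseteq> {u. inner e u = sum Y UNIV}" by (auto simp: inner_e Y_def)
      show "convex {u. inner e u = sum Y UNIV}" by (rule convex_hyperplane)
    qed
    then show ?thesis using xh inner_e[of x] by (auto simp: X_def)
  qed
  show "vec_majorized (lam x) (lam y)" unfolding maj_iff using part tot by (simp add: X_def Y_def)
next
  assume maj: "vec_majorized (lam x) (lam y)"
  define X where "X i = lam x $ i" for i
  define Y where "Y i = lam y $ i" for i
  have pw: "sum X (seg k) \<le> sum Y (seg k)" for k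
  proof (cases "k = 0")
    case True then show ?thesis by (simp add: seg_def)
  next
    case False
    show ?thesis
    proof (cases "k \<le> CARD('n)")
      case True then show ?thesis using maj False unfolding maj_iff by (simp add: X_def Y_def)
    next
      case False then show ?thesis using maj seg_big[of k] unfolding maj_iff by (simp add: X_def Y_def)
    qed
  qed
  have tot: "sum X UNIV = sum Y UNIV" using maj unfolding maj_iff by (simp add: X_def Y_def)
  show "x \<in> convex hull {z. lam z = lam y}"
  proof (rule ccontr)
    assume nx: "x \<notin> convex hull {z. lam z = lam y}"
    have cp: "compact (convex hull {z. lam z = lam y})" by (rule class_compact[OF A_norm A_inner])
    obtain a where a: "\<And>z. lam z = lam y \<Longrightarrow> inner a z < inner a x"
      using separate[OF cp nx] by blast
    define M where "M i = lam a $ i" for i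
    obtain c where fc: "jordan_frame jp e UNIV c" and ac: "a = (\<Sum>i\<in>UNIV. M i *\<^sub>R c i)"
      using em_frame[of a] by (auto simp: M_def)
    define z0 where "z0 = (\<Sum>j\<in>UNIV. Y j *\<^sub>R c j)"
    have Yd: "decr Y" using em_decr[of y] by (simp add: Y_def)
    have lz: "lam z0 = lam y" unfolding z0_def vec_eq_iff using eig_unique[OF fc Yd] by (simp add: Y_def)
    have az: "inner a z0 = (\<Sum>i\<in>UNIV. M i * Y i)"
    proof -
      have "\<And>j. inner a (c j) = M j" using fr_coef[OF fc, of M] ac by simp
      then show ?thesis unfolding z0_def by (simp add: inner_sum_right mult.commute)
    qed
    have "inner a x \<le> inner (lam a) (lam x)" by (rule A_inner)
    also have "\<dots> = (\<Sum>i\<in>UNIV. M i * X i)" by (simp add: inner_vec_def M_def X_def)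
    also have "\<dots> \<le> (\<Sum>i\<in>UNIV. M i * Y i)"
      by (rule abel[OF _ pw tot]) (use em_decr[of a] in \<open>simp add: M_def\<close>)
    finally show False using a[OF lz] az by simp
  qed
qed

end

theorem corollary10p4:
  shows "(\<forall>(lam :: 'v::euclidean_space \<Rightarrow> 'w::euclidean_space) (mu :: 'w \<Rightarrow> 'w) x y.
            reduced_system mu lam \<longrightarrow>
            (ftvn_majorized lam x y \<longleftrightarrow> ftvn_majorized mu (lam x) (lam y)))
       \<and>
         (\<forall>(jp :: 'a::euclidean_space \<Rightarrow> 'a \<Rightarrow> 'a) e (lam :: 'a \<Rightarrow> (real, 'n::{finite,linorder}) vec) x y.
            EJA_rank jp e CARD('n) \<and>
            eigenvalue_map jp e lam \<and>
            (\<forall>u v. inner u v = EJA_trace lam (jp u v)) \<longrightarrow>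
            (x \<in> convex hull {z. lam z = lam y} \<longleftrightarrow> vec_majorized (lam x) (lam y)))"
proof (intro conjI allI impI)
  fix lam :: "'v::euclidean_space \<Rightarrow> 'w::euclidean_space" and mu :: "'w \<Rightarrow> 'w" and x y
  assume "reduced_system mu lam"
  then show "ftvn_majorized lam x y \<longleftrightarrow> ftvn_majorized mu (lam x) (lam y)" by (rule part1)
next
  fix jp :: "'a::euclidean_space \<Rightarrow> 'a \<Rightarrow> 'a" and e and lam :: "'a \<Rightarrow> (real, 'n::{finite,linorder}) vec" and x y
  assume h: "EJA_rank jp e CARD('n) \<and> eigenvalue_map jp e lam \<and> (\<forall>u v. inner u v = EJA_trace lam (jp u v))"
  then have "EJA jp e" by (simp add: EJA_rank_def)
  with h show "x \<in> convex hull {z. lam z = lam y} \<longleftrightarrow> vec_majorized (lam x) (lam y)"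
    using part2 by blast
qed

end
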